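(* Let $n,k,r$ be integers with $k,r\geq 2$ and $n\geq k+r$, and let $H$ be a vertex-$k$-maximal $r$-uniform hypergraph on $n$ vertices with a separation triple $(S,H_1,H_2)$, and let $n_i=|V(H_i)|$ for $i=1,2$. Then (i) every $r$-subset $e$ of $V(H)$ with $e\cap (V(H_1)\setminus S)\neq\emptyset$, $e\cap S\neq\emptyset$ and $e\cap (V(H_2)\setminus S)\neq\emptyset$ is an edge of $H$; and (ii) the number of edges of $H$ meeting each of $V(H_1)\setminus S$, $S$ and $V(H_2)\setminus S$ equals $$\binom{n}{r}-\binom{n_1}{r}-\binom{n_2}{r}+\binom{k}{r}-\binom{n-k}{r}+\binom{n_1-k}{r}+\binom{n_2-k}{r}.$$
   Context: Binomial coefficients satisfy $\binom{a}{b}=0$ when $b>a$. A hypergraph $H=(V,E)$ consists of a finite vertex set $V$ and a set $E$ of non-empty subsets of $V$ (edges). $H$ is $r$-uniform if every edge has exactly $r$ elements. The complement $H^c$ of an $r$-uniform hypergraph is the $r$-uniform hypergraph on the same vertex set whose edges are the $r$-subsets not in $E$. A subhypergraph of $H$ is $H'=(V',E')$ with $V'\subseteq V$, $E'\subseteq E$. For $e\in E(H^c)$, $H+e=(V,E\cup\{e\})$. For $Y\subseteq V$, $H[Y]$ is the induced hypergraph with vertex set $Y$ and edges $\{e\in E: e\subseteq Y\}$, and $H-Y=H[V\setminus Y]$. Connectedness and components are defined via paths (alternating sequences of distinct vertices and distinct edges, consecutive vertices lying in the intermediate edge). A vertex-cut is a set $X$ with $H-X$ disconnected. $\kappa(H)$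 is the minimum size of a vertex-cut if one exists, and $|V(H)|-1$ otherwise. $\overline{\kappa}(H)=\max\{\kappa(H'): H'\subseteq H\}$. $H$ is vertex-$k$-maximal if $\overline{\kappa}(H)\leq k$ but $\overline{\kappa}(H+e)\geq k+1$ for every $e\in E(H^c)$. For such $H$ with $|V(H)|\geq k+r$, a separation triple $(S,H_1,H_2)$ is obtained by taking a minimum vertex-cut $S$ (of size $k$), a component $C_1$ of $H-S$, letting $C_2=H-(S\cup V(C_1))$, $H_1=H[S\cup V(C_1)]$ and $H_2=H[S\cup V(C_2)]$. *)

theory Defs
  imports Main
begin

type_synonym 'a hg = "'a set \<times> 'a set set"

definition verts :: "'a hg \<Rightarrow> 'a set" where "verts H = fst H"
definition edges :: "'a hg \<Rightarrow> 'a set set" where "edges H = snd H"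

definition hypergraph :: "'a hg \<Rightarrow> bool" where
  "hypergraph H \<longleftrightarrow> finite (verts H) \<and> (\<forall>e\<in>edges H. e \<noteq> {} \<and> e \<subseteq> verts H)"

definition uniform :: "nat \<Rightarrow> 'a hg \<Rightarrow> bool" where
  "uniform r H \<longleftrightarrow> (\<forall>e\<in>edges H. card e = r)"

definition compl_edges :: "nat \<Rightarrow> 'a hg \<Rightarrow> 'a set set" where
  "compl_edges r H = {e. e \<subseteq> verts H \<and> card e = r \<and> e \<notin> edges H}"

definition add_edge :: "'a hg \<Rightarrow> 'a set \<Rightarrow> 'a hg" where
  "add_edge H e = (verts H, insert e (edges H))"

definition subhypergraph :: "'a hg \<Rightarrow> 'a hg \<Rightarrow> bool" where
  "subhypergraph H' H \<longleftrightarrow> hypergraph H' \<and> verts H' \<subseteq> verts H \<and> edges H' \<subseteq> edges H"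

definition induced :: "'a hg \<Rightarrow> 'a set \<Rightarrow> 'a hg" where
  "induced H Y = (Y, {e\<in>edges H. e \<subseteq> Y})"

definition del_verts :: "'a hg \<Rightarrow> 'a set \<Rightarrow> 'a hg" where
  "del_verts H Y = induced H (verts H - Y)"

definition is_path :: "'a hg \<Rightarrow> 'a list \<Rightarrow> 'a set list \<Rightarrow> bool" where
  "is_path H vs es \<longleftrightarrow> vs \<noteq> [] \<and> length es = length vs - 1 \<and> distinct vs \<and> distinct es \<and>
     set vs \<subseteq> verts H \<and> set es \<subseteq> edges H \<and>
     (\<forall>i < length es. vs ! i \<in> es ! i \<and> vs ! Suc i \<in> es ! i)"

definition joined :: "'a hg \<Rightarrow> 'a \<Rightarrow> 'a \<Rightarrow> bool" where
  "joined H u v \<longleftrightarrow> (\<exists>vs es. is_path H vs es \<and> hd vs = u \<and> last vs = v)"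

definition connected_hg :: "'a hg \<Rightarrow> bool" where
  "connected_hg H \<longleftrightarrow> (\<forall>u\<in>verts H. \<forall>v\<in>verts H. joined H u v)"

definition component_verts :: "'a hg \<Rightarrow> 'a set \<Rightarrow> bool" where
  "component_verts H C \<longleftrightarrow> (\<exists>u\<in>verts H. C = {v\<in>verts H. joined H u v})"

definition vertex_cut :: "'a hg \<Rightarrow> 'a set \<Rightarrow> bool" where
  "vertex_cut H X \<longleftrightarrow> X \<subseteq> verts H \<and> \<not> connected_hg (del_verts H X)"

definition kappa :: "'a hg \<Rightarrow> nat" where
  "kappa H = (if \<exists>X. vertex_cut H X
              then (LEAST m. \<exists>X. vertex_cut H X \<and> card X = m)
              else card (verts H) - 1)"

definition kappa_bar :: "'a hg \<Rightarrow> nat" where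
  "kappa_bar H = Max {kappa H' | H'. subhypergraph H' H}"

definition vertex_k_maximal :: "nat \<Rightarrow> nat \<Rightarrow> 'a hg \<Rightarrow> bool" where
  "vertex_k_maximal k r H \<longleftrightarrow> kappa_bar H \<le> k \<and>
     (\<forall>e\<in>compl_edges r H. kappa_bar (add_edge H e) \<ge> k + 1)"

definition separation_triple :: "'a hg \<Rightarrow> nat \<Rightarrow> 'a set \<Rightarrow> 'a hg \<Rightarrow> 'a hg \<Rightarrow> bool" where
  "separation_triple H k S H1 H2 \<longleftrightarrow>
     vertex_cut H S \<and> card S = kappa H \<and> card S = k \<and>
     (\<exists>C1. component_verts (del_verts H S) C1 \<and>
        H1 = induced H (S \<union> C1) \<and>
        H2 = induced H (S \<union> verts (del_verts H (S \<union> C1))))"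

end

theory Submission
  imports Defs
begin

lemma path_mono: "is_path G vs es \<Longrightarrow> verts G \<subseteq> verts G' \<Longrightarrow> edges G \<subseteq> edges G' \<Longrightarrow> is_path G' vs es"
  by (auto simp: is_path_def)

lemma path_extend:
  assumes p: "is_path G vs es" and f: "f \<in> edges G" "last vs \<in> f" "y \<in> f" "y \<in> verts G"
  shows "joined G (hd vs) y"
proof (cases "y \<in> set vs")
  case True
  then obtain i where i: "i < length vs" "vs ! i = y" by (auto simp: in_set_conv_nth)
  have ne: "vs \<noteq> []" using p by (simp add: is_path_def)
  have "is_path G (take (Suc i) vs) (take i es)"
    using p i unfolding is_path_def
    by (auto dest: in_set_takeD)
  moreover have "hd (take (Suc i) vs) = hd vs" using ne by (cases vs) auto
  moreover have "last (take (Suc i) vs) = y" using i by (simp add: take_Suc_conv_app_nth)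
  ultimately show ?thesis unfolding joined_def by blast
next
  case False
  note yn = False
  have ne: "vs \<noteq> []" and len: "length es = length vs - 1" using p by (auto simp: is_path_def)
  show ?thesis
  proof (cases "f \<in> set es")
    case True
    then obtain i where i: "i < length es" "es ! i = f" by (auto simp: in_set_conv_nth)
    have fi: "f \<notin> set (take i es)" using p i unfolding is_path_def
      by (metis distinct_take id_take_nth_drop distinct_append not_distinct_conv_prefix
          in_set_conv_nth length_take min.strict_order_iff nth_take)
    have "is_path G (take (Suc i) vs @ [y]) (take i es @ [f])"
      using p i yn fi f len unfolding is_path_def
      apply (auto dest: in_set_takeD simp: nth_append)
      apply (subgoal_tac "ia = i", simp, simp)
      done
    moreover have "hd (take (Suc i) vs @ [y]) = hd vs" using ne by (cases vs) auto
    ultimately show ?thesis unfolding joined_def by fastforce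
  next
    case False
    have "is_path G (vs @ [y]) (es @ [f])"
      using p yn False f len unfolding is_path_def
      apply (auto simp: nth_append)
      apply (subgoal_tac "i = length vs - 1", simp add: last_conv_nth, simp)
      done
    moreover have "hd (vs @ [y]) = hd vs" using ne by (cases vs) auto
    ultimately show ?thesis unfolding joined_def by fastforce
  qed
qed
lemma joined_extend:
  assumes "joined G u x" "f \<in> edges G" "x \<in> f" "y \<in> f" "y \<in> verts G"
  shows "joined G u y"
  using assms path_extend unfolding joined_def by metis

lemma joined_path:
  assumes j: "joined G u x" and p: "is_path G ws ds" and h: "hd ws = x"
  shows "joined G u (last ws)"
proof -
  have ne: "ws \<noteq> []" and len: "length ds = length ws - 1" using p by (auto simp: is_path_def)
  have "\<forall>m. m < length ws \<longrightarrow> joined G u (ws ! m)"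
  proof
    fix m show "m < length ws \<longrightarrow> joined G u (ws ! m)"
    proof (induction m)
      case 0 then show ?case using j h ne by (simp add: hd_conv_nth)
    next
      case (Suc m)
      show ?case
      proof
        assume m: "Suc m < length ws"
        then have jm: "joined G u (ws ! m)" using Suc by simp
        have "m < length ds" using m len by simp
        then have "ds ! m \<in> edges G" "ws ! m \<in> ds ! m" "ws ! Suc m \<in> ds ! m"
          using p unfolding is_path_def by auto
        moreover have "ws ! Suc m \<in> verts G" using p m unfolding is_path_def by auto
        ultimately show "joined G u (ws ! Suc m)" using joined_extend jm by metis
      qed
    qed
  qed
  then show ?thesis using ne by (simp add: last_conv_nth)
qed

lemma kappa_le_cut: "vertex_cut G X \<Longrightarrow> kappa G \<le> card X"
  unfolding kappa_def by (auto intro: Least_le)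

lemma kappa_le_card: "finite (verts G) \<Longrightarrow> kappa G \<le> card (verts G)"
proof (cases "\<exists>X. vertex_cut G X")
  case True
  assume f: "finite (verts G)"
  then obtain X where X: "vertex_cut G X" using True by blast
  have "kappa G \<le> card X" using kappa_le_cut[OF X] .
  also have "card X \<le> card (verts G)" using X f by (auto simp: vertex_cut_def intro: card_mono)
  finally show ?thesis .
next
  case False then show ?thesis by (simp add: kappa_def)
qed

lemma kappa_set_finite:
  assumes "finite (verts G)"
  shows "finite {kappa H' | H'. subhypergraph H' G}"
proof (rule finite_subset[of _ "{..card (verts G)}"])
  show "{kappa H' | H'. subhypergraph H' G} \<subseteq> {..card (verts G)}"
  proof
    fix m assume "m \<in> {kappa H' | H'. subhypergraph H' G}"
    then obtain H' where H': "subhypergraph H' G" "m = kappa H'" by blast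
    have f: "finite (verts H')" using H' by (simp add: subhypergraph_def hypergraph_def)
    have "m \<le> card (verts H')" using H' kappa_le_card[OF f] by simp
    also have "\<dots> \<le> card (verts G)" using H' assms by (auto simp: subhypergraph_def intro: card_mono)
    finally show "m \<in> {..card (verts G)}" by simp
  qed
qed simp

lemma kappa_le_bar: "finite (verts G) \<Longrightarrow> subhypergraph H' G \<Longrightarrow> kappa H' \<le> kappa_bar G"
  unfolding kappa_bar_def by (rule Max_ge) (blast intro: kappa_set_finite)+

lemma kappa_bar_attained:
  assumes "finite (verts G)"
  shows "\<exists>H'. subhypergraph H' G \<and> kappa H' = kappa_bar G"
proof -
  have "subhypergraph ({}, {}) G" by (simp add: subhypergraph_def hypergraph_def verts_def edges_def)
  then have "{kappa H' | H'. subhypergraph H' G} \<noteq> {}" by blast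
  from Max_in[OF kappa_set_finite[OF assms] this] show ?thesis unfolding kappa_bar_def 
    by (smt (verit) mem_Collect_eq)
qed

lemma part1:
  assumes hg: "hypergraph H" and mx: "vertex_k_maximal k r H"
    and S: "S \<subseteq> verts H" "card S = k"
    and C1: "C1 = {v \<in> verts H - S. joined (del_verts H S) u v}"
    and e: "e \<subseteq> verts H" "card e = r" "x \<in> e" "x \<in> C1" "s \<in> e" "s \<in> S"
       "y \<in> e" "y \<in> verts H - S - C1"
  shows "e \<in> edges H"
proof (rule ccontr)
  assume ne: "e \<notin> edges H"
  have fV: "finite (verts H)" using hg by (simp add: hypergraph_def)
  have "e \<in> compl_edges r H" using e ne by (simp add: compl_edges_def)
  then have kb: "kappa_bar (add_edge H e) \<ge> k + 1" using mx by (simp add: vertex_k_maximal_def)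
  have vA: "verts (add_edge H e) = verts H" "edges (add_edge H e) = insert e (edges H)"
    by (simp_all add: add_edge_def verts_def edges_def)
  obtain H' where H': "subhypergraph H' (add_edge H e)" "kappa H' = kappa_bar (add_edge H e)"
    using kappa_bar_attained[of "add_edge H e"] fV vA by auto
  have eH': "e \<in> edges H'"
  proof (rule ccontr)
    assume "e \<notin> edges H'"
    then have "subhypergraph H' H" using H'(1) vA by (auto simp: subhypergraph_def)
    then have "kappa H' \<le> kappa_bar H" using kappa_le_bar fV by blast
    also have "\<dots> \<le> k" using mx by (simp add: vertex_k_maximal_def)
    finally show False using H'(2) kb by simp
  qed
  have hH': "hypergraph H'" and vH': "verts H' \<subseteq> verts H" and eH'sub: "edges H' \<subseteq> insert e (edges H)"
    using H'(1) vA by (auto simp: subhypergraph_def)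
  have eV': "e \<subseteq> verts H'" using hH' eH' by (auto simp: hypergraph_def)
  define X where "X = S \<inter> verts H'"
  define G where "G = del_verts H' X"
  have vG: "verts G = verts H' - X" and eG: "edges G = {f \<in> edges H'. f \<subseteq> verts H' - X}"
    by (simp_all add: G_def del_verts_def induced_def verts_def edges_def)
  have vHS: "verts (del_verts H S) = verts H - S" and eHS: "edges (del_verts H S) = {f \<in> edges H. f \<subseteq> verts H - S}"
    by (simp_all add: del_verts_def induced_def verts_def edges_def)
  have xG: "x \<in> verts G" "y \<in> verts G" using e eV' C1 by (auto simp: vG X_def)
  have nj: "\<not> joined G x y"
  proof
    assume "joined G x y"
    then obtain vs es where p: "is_path G vs es" "hd vs = x" "last vs = y" by (auto simp: joined_def)
    have "verts G \<subseteq> verts (del_verts H S)" using vG vHS vH' X_def by auto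
    moreover have "edges G \<subseteq> edges (del_verts H S)"
    proof
      fix f assume f: "f \<in> edges G"
      then have f1: "f \<in> edges H'" "f \<subseteq> verts H' - X" using eG by auto
      then have "f \<inter> S = {}" using X_def by auto
      then have "f \<noteq> e" using e by auto
      then have "f \<in> edges H" using f1 eH'sub by auto
      then show "f \<in> edges (del_verts H S)" using eHS f1 vH' \<open>f \<inter> S = {}\<close> by auto
    qed
    ultimately have p2: "is_path (del_verts H S) vs es" using path_mono p(1) by blast
    have "joined (del_verts H S) u x" using C1 e by auto
    then have "joined (del_verts H S) u y" using joined_path[OF _ p2] p by auto
    then show False using C1 e by auto
  qed
  have "vertex_cut H' X" unfolding vertex_cut_def connected_hg_def
    using nj xG by (auto simp: X_def G_def)
  then have "kappa H' \<le> card X" by (rule kappa_le_cut)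
  also have "\<dots> \<le> card S" unfolding X_def using S fV by (auto intro: card_mono finite_subset)
  finally show False using S H'(2) kb by simp
qed

definition subs :: "nat \<Rightarrow> 'a set \<Rightarrow> 'a set set" where
  "subs r D = {e. e \<subseteq> D \<and> card e = r}"

lemma card_subs: "finite D \<Longrightarrow> card (subs r D) = card D choose r"
  unfolding subs_def by (rule n_subsets)

lemma fin_subs: "finite D \<Longrightarrow> finite (subs r D)"
  unfolding subs_def by (rule finite_subset[of _ "Pow D"]) auto

lemma subs_Int: "subs r D \<inter> subs r D' = subs r (D \<inter> D')"
  unfolding subs_def by auto

lemma count3:
  assumes f: "finite A" "finite S" "finite B"
    and d: "A \<inter> S = {}" "A \<inter> B = {}" "S \<inter> B = {}" and r: "r > 0"
  shows "int (card {e. e \<subseteq> A \<union> S \<union> B \<and> card e = r \<and> e \<inter> A \<noteq> {} \<and> e \<inter> S \<noteq> {} \<and> e \<inter> B \<noteq> {}})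
    = int (card (A \<union> S \<union> B) choose r) - int (card (A \<union> S) choose r) - int (card (S \<union> B) choose r)
      + int (card S choose r) - int (card (A \<union> B) choose r) + int (card A choose r) + int (card B choose r)"
proof -
  define P where "P = {e. e \<subseteq> A \<union> S \<union> B \<and> card e = r \<and> e \<inter> A \<noteq> {} \<and> e \<inter> S \<noteq> {} \<and> e \<inter> B \<noteq> {}}"
  define X where "X = subs r (S \<union> B)"
  define Y where "Y = subs r (A \<union> B)"
  define Z where "Z = subs r (A \<union> S)"
  have fX: "finite X" "finite Y" "finite Z" using f by (auto simp: X_def Y_def Z_def fin_subs)
  have T: "subs r (A \<union> S \<union> B) = P \<union> (X \<union> Y \<union> Z)"
    unfolding P_def X_def Y_def Z_def subs_def by auto
  have disj: "P \<inter> (X \<union> Y \<union> Z) = {}"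
    unfolding P_def X_def Y_def Z_def subs_def using d by auto
  have fP: "finite P" unfolding P_def
    by (rule finite_subset[of _ "Pow (A \<union> S \<union> B)"]) (use f in auto)
  have c1: "card (subs r (A \<union> S \<union> B)) = card P + card (X \<union> Y \<union> Z)"
    using T disj fP fX by (simp add: card_Un_disjoint)
  have XY: "X \<inter> Y = subs r B" proof - have "(S \<union> B) \<inter> (A \<union> B) = B" using d by blast then show ?thesis unfolding X_def Y_def subs_Int by simp qed
  have XZ: "X \<inter> Z = subs r S" proof - have "(S \<union> B) \<inter> (A \<union> S) = S" using d by blast then show ?thesis unfolding X_def Z_def subs_Int by simp qed
  have YZ: "Y \<inter> Z = subs r A" proof - have "(A \<union> B) \<inter> (A \<union> S) = A" using d by blast then show ?thesis unfolding Y_def Z_def subs_Int by simp qed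
  have XYZ: "(X \<inter> Z) \<inter> (Y \<inter> Z) = {}" unfolding XZ YZ subs_Int using d r
    by (auto simp: subs_def) (metis Int_subset_iff card.empty less_irrefl subset_empty)
  have c2: "card (X \<union> Y) + card (X \<inter> Y) = card X + card Y" using card_Un_Int[OF fX(1) fX(2)] by linarith
  have c3: "card ((X \<union> Y) \<union> Z) + card ((X \<union> Y) \<inter> Z) = card (X \<union> Y) + card Z" using card_Un_Int[OF finite_UnI[OF fX(1) fX(2)] fX(3)] by linarith
  have c4: "card ((X \<inter> Z) \<union> (Y \<inter> Z)) + card ((X \<inter> Z) \<inter> (Y \<inter> Z)) = card (X \<inter> Z) + card (Y \<inter> Z)"
    using card_Un_Int[of "X \<inter> Z" "Y \<inter> Z"] fX by simp
  have e1: "(X \<union> Y) \<inter> Z = (X \<inter> Z) \<union> (Y \<inter> Z)" by blast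
  have cA: "card (A \<union> S \<union> B) = card A + card S + card B" "card (A \<union> S) = card A + card S"
    "card (S \<union> B) = card S + card B" "card (A \<union> B) = card A + card B"
    using f d by (simp_all add: card_Un_disjoint Int_Un_distrib2)
  have fin4: "finite (A \<union> S \<union> B)" "finite (A \<union> S)" "finite (S \<union> B)" "finite (A \<union> B)" using f by auto
  have k1: "card (subs r (A \<union> S \<union> B)) = card (A \<union> S \<union> B) choose r" using card_subs[OF fin4(1)] .
  have k2: "card X = card (S \<union> B) choose r" unfolding X_def using card_subs[OF fin4(3)] .
  have k3: "card Y = card (A \<union> B) choose r" unfolding Y_def using card_subs[OF fin4(4)] .
  have k4: "card Z = card (A \<union> S) choose r" unfolding Z_def using card_subs[OF fin4(2)] .
  have k5: "card (X \<inter> Y) = card B choose r" unfolding XY using card_subs[OF f(3)] .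
  have k6: "card (X \<inter> Z) = card S choose r" unfolding XZ using card_subs[OF f(2)] .
  have k7: "card (Y \<inter> Z) = card A choose r" unfolding YZ using card_subs[OF f(1)] .
  have c3': "card (X \<union> Y \<union> Z) + card (X \<inter> Z) + card (Y \<inter> Z) = card (X \<union> Y) + card Z"
    using c3 c4 e1 XYZ by simp
  have "int (card P) = int (card (subs r (A \<union> S \<union> B))) - int (card X) - int (card Y) - int (card Z)
     + int (card (X \<inter> Y)) + int (card (X \<inter> Z)) + int (card (Y \<inter> Z))"
    using c1 c2 c3' by linarith
  then show ?thesis unfolding P_def k1 k2 k3 k4 k5 k6 k7 by linarith
qed

theorem lemma2p3:
  fixes H H1 H2 :: "'a hg" and S :: "'a set" and n k r :: nat
  assumes "k \<ge> 2" and "r \<ge> 2" and "n \<ge> k + r"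
    and "hypergraph H" and "uniform r H" and "card (verts H) = n"
    and "vertex_k_maximal k r H"
    and "separation_triple H k S H1 H2"
  shows "(\<forall>e. e \<subseteq> verts H \<and> card e = r \<and> e \<inter> (verts H1 - S) \<noteq> {} \<and> e \<inter> S \<noteq> {}
              \<and> e \<inter> (verts H2 - S) \<noteq> {} \<longrightarrow> e \<in> edges H)
       \<and> int (card {e \<in> edges H. e \<inter> (verts H1 - S) \<noteq> {} \<and> e \<inter> S \<noteq> {} \<and> e \<inter> (verts H2 - S) \<noteq> {}})
         = int (n choose r) - int (card (verts H1) choose r) - int (card (verts H2) choose r)
           + int (k choose r) - int ((n - k) choose r)
           + int ((card (verts H1) - k) choose r) + int ((card (verts H2) - k) choose r)"
proof -
  note st = assms(8)[unfolded separation_triple_def]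
  have SV: "S \<subseteq> verts H" and cS: "card S = k" using st by (auto simp: vertex_cut_def)
  obtain C1 where c1: "component_verts (del_verts H S) C1" and H1: "H1 = induced H (S \<union> C1)"
    and H2: "H2 = induced H (S \<union> verts (del_verts H (S \<union> C1)))" using st by blast
  have vd: "\<And>Y. verts (del_verts H Y) = verts H - Y"
    by (simp add: del_verts_def induced_def verts_def)
  obtain u where C1: "C1 = {v \<in> verts H - S. joined (del_verts H S) u v}"
    using c1 vd unfolding component_verts_def by auto
  define B where "B = verts H - (S \<union> C1)"
  have C1V: "C1 \<subseteq> verts H - S" using C1 by auto
  have v1: "verts H1 - S = C1" using H1 C1V by (auto simp: induced_def verts_def)
  have vH1: "verts H1 = C1 \<union> S" using H1 by (auto simp: induced_def verts_def)
  have "verts H2 = S \<union> verts (del_verts H (S \<union> C1))" unfolding H2 by (simp add: induced_def verts_def)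
  then have vH2: "verts H2 = S \<union> B" unfolding vd B_def .
  have v2: "verts H2 - S = B" unfolding vH2 B_def by auto
  have fV: "finite (verts H)" using assms(4) by (simp add: hypergraph_def)
  have part: "\<forall>e. e \<subseteq> verts H \<and> card e = r \<and> e \<inter> C1 \<noteq> {} \<and> e \<inter> S \<noteq> {}
              \<and> e \<inter> B \<noteq> {} \<longrightarrow> e \<in> edges H"
  proof (intro allI impI)
    fix e assume e: "e \<subseteq> verts H \<and> card e = r \<and> e \<inter> C1 \<noteq> {} \<and> e \<inter> S \<noteq> {} \<and> e \<inter> B \<noteq> {}"
    then obtain x s y where "x \<in> e" "x \<in> C1" "s \<in> e" "s \<in> S" "y \<in> e" "y \<in> B" by blast
    then show "e \<in> edges H" using e by (intro part1[OF assms(4) assms(7) SV cS C1, of e x s y]) (auto simp: B_def)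
  qed
  have fin: "finite C1" "finite S" "finite B" using fV SV C1V unfolding B_def
    by (meson Diff_subset finite_subset)+
  have dj: "C1 \<inter> S = {}" "C1 \<inter> B = {}" "S \<inter> B = {}" using C1V B_def by auto
  have U: "C1 \<union> S \<union> B = verts H" using C1V SV B_def by auto
  have seteq: "{e \<in> edges H. e \<inter> C1 \<noteq> {} \<and> e \<inter> S \<noteq> {} \<and> e \<inter> B \<noteq> {}}
     = {e. e \<subseteq> C1 \<union> S \<union> B \<and> card e = r \<and> e \<inter> C1 \<noteq> {} \<and> e \<inter> S \<noteq> {} \<and> e \<inter> B \<noteq> {}}"
  proof (rule set_eqI, rule iffI)
    fix e assume "e \<in> {e \<in> edges H. e \<inter> C1 \<noteq> {} \<and> e \<inter> S \<noteq> {} \<and> e \<inter> B \<noteq> {}}"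
    moreover have "\<And>e. e \<in> edges H \<Longrightarrow> e \<subseteq> verts H \<and> card e = r"
      using assms(4,5) unfolding hypergraph_def uniform_def by blast
    ultimately show "e \<in> {e. e \<subseteq> C1 \<union> S \<union> B \<and> card e = r \<and> e \<inter> C1 \<noteq> {} \<and> e \<inter> S \<noteq> {} \<and> e \<inter> B \<noteq> {}}"
      unfolding U by simp
  next
    fix e assume "e \<in> {e. e \<subseteq> C1 \<union> S \<union> B \<and> card e = r \<and> e \<inter> C1 \<noteq> {} \<and> e \<inter> S \<noteq> {} \<and> e \<inter> B \<noteq> {}}"
    then show "e \<in> {e \<in> edges H. e \<inter> C1 \<noteq> {} \<and> e \<inter> S \<noteq> {} \<and> e \<inter> B \<noteq> {}}"
      using part unfolding U by simp
  qed
  have cnt: "int (card {e. e \<subseteq> C1 \<union> S \<union> B \<and> card e = r \<and> e \<inter> C1 \<noteq> {} \<and> e \<inter> S \<noteq> {} \<and> e \<inter> B \<noteq> {}})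
    = int (card (C1 \<union> S \<union> B) choose r) - int (card (C1 \<union> S) choose r) - int (card (S \<union> B) choose r)
      + int (card S choose r) - int (card (C1 \<union> B) choose r) + int (card C1 choose r) + int (card B choose r)"
    using count3[OF fin dj, of r] assms(2) by simp
  have k1: "card (C1 \<union> S \<union> B) = n" using U assms(6) by simp
  have k2: "card (C1 \<union> S) = card C1 + k" using fin dj cS by (simp add: card_Un_disjoint)
  have k3: "card (S \<union> B) = card B + k" using fin dj cS by (simp add: card_Un_disjoint)
  have "C1 \<union> B = verts H - S" using C1V B_def by auto
  then have k4: "card (C1 \<union> B) = n - k" using card_Diff_subset[OF finite_subset[OF SV fV] SV] assms(6) cS by simp
  show ?thesis
    unfolding v1 v2 seteq cnt unfolding vH1 vH2 k1 k2 k3 k4 using part cS by simp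
qed
end
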